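(* Let $\frac13<q<1$ and let $a>0$. Define the probability distribution $p^{(a)}=(p^{(a)}_k)_{k\in\mathbb{Z}}$ on $\mathbb{Z}$ by $$p^{(a)}_k=f_q(a)^{-1}\Big(1+\frac{k^2}{a^2}\Big)^{\frac{1}{q-1}},\qquad f_q(a)=\sum_{k\in\mathbb{Z}}\Big(1+\frac{k^2}{a^2}\Big)^{\frac{1}{q-1}} .$$ Then $p^{(a)}$ has zero mean and finite variance $\sigma^2=\sum_{k\in\mathbb{Z}}k^2p^{(a)}_k$, and $p^{(a)}$ maximizes the Tsallis entropy $H_q$ over all probability distributions $p$ on $\mathbb{Z}$ satisfying $\sum_{k}k\,p_k=0$ and $\sum_k k^2p_k=\sigma^2$.
   Context: For a probability distribution $p=(p_k)_{k\in\mathbb{Z}}$ on $\mathbb{Z}$ and $q\neq 1$, the Tsallis entropy is $H_q(p)=\frac{1}{q-1}\big(1-\sum_{k\in\mathbb{Z}}p_k^q\big)$. In the paper $a^2=k_BT=1/\beta$ is interpreted as a temperature and $\sum_k k^2 p_k$ as the mean energy $U$. *)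

theory Defs
  imports "HOL-Analysis.Analysis"
begin

definition prob_dist_Z :: "(int \<Rightarrow> real) \<Rightarrow> bool" where
  "prob_dist_Z p \<longleftrightarrow> (\<forall>k. 0 \<le> p k) \<and> (p has_sum 1) UNIV"

definition tsallis :: "real \<Rightarrow> (int \<Rightarrow> real) \<Rightarrow> real" where
  "tsallis q p = (1 - (\<Sum>\<^sub>\<infinity>k. p k powr q)) / (q - 1)"

definition fq :: "real \<Rightarrow> real \<Rightarrow> real" where
  "fq q a = (\<Sum>\<^sub>\<infinity>k::int. (1 + (of_int k)^2 / a^2) powr (1 / (q - 1)))"

definition pa :: "real \<Rightarrow> real \<Rightarrow> int \<Rightarrow> real" where
  "pa q a k = (1 + (of_int k)^2 / a^2) powr (1 / (q - 1)) / fq q a"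

end

theory Submission
  imports Defs
begin

lemma int_powr_summable:
  fixes r :: real assumes r: "r > 1"
  shows "(\<lambda>k::int. real_of_int \<bar>k\<bar> powr (-r)) summable_on UNIV"
proof -
  let ?h = "\<lambda>k::int. real_of_int \<bar>k\<bar> powr (-r)"
  have s: "summable (\<lambda>n. real n powr (-r))" using r by (simp add: summable_real_powr_iff)
  have s1: "(\<lambda>n. real n powr (-r)) summable_on UNIV"
    using s by (subst summable_on_UNIV_nonneg_real_iff) auto
  have "(?h \<circ> int) = (\<lambda>n. real n powr (-r))" by (auto simp: o_def)
  hence a: "?h summable_on range int"
    using s1 by (subst summable_on_reindex) (auto simp: inj_on_def)
  have "(?h \<circ> (\<lambda>n. - int n)) = (\<lambda>n. real n powr (-r))" by (auto simp: o_def)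
  hence b: "?h summable_on range (\<lambda>n. - int n)"
    using s1 by (subst summable_on_reindex) (auto simp: inj_on_def)
  have u: "range int \<union> range (\<lambda>n. - int n) = (UNIV :: int set)"
  proof (rule set_eqI)
    fix k :: int show "k \<in> range int \<union> range (\<lambda>n. - int n) \<longleftrightarrow> k \<in> UNIV"
    proof (cases "k \<ge> 0")
      case True then have "k = int (nat k)" by simp
      then show ?thesis by blast
    next
      case False then have "k = - int (nat (-k))" by simp
      then show ?thesis by blast
    qed
  qed
  show ?thesis using summable_on_union[OF a b] unfolding u .
qed

lemma key_bound:
  fixes a t :: real and k :: int
  assumes a: "a > 0" and t: "t \<ge> 0" and k: "k \<noteq> 0"
  shows "(1 + (of_int k)^2 / a^2) powr (-t) \<le> a powr (2*t) * real_of_int \<bar>k\<bar> powr (-2*t)"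
proof -
  have kp: "real_of_int \<bar>k\<bar> > 0" using k by simp
  have e1: "(of_int k)^2 / a^2 = (real_of_int \<bar>k\<bar> / a) powr 2"
    using a kp by (simp add: powr_realpow' power_divide)
  have "(1 + (of_int k)^2 / a^2) powr (-t) \<le> ((of_int k)^2 / a^2) powr (-t)"
    by (rule powr_mono2') (use t a k in auto)
  also have "\<dots> = (real_of_int \<bar>k\<bar> / a) powr (-2*t)"
    unfolding e1 by (simp add: powr_powr)
  also have "\<dots> = a powr (2*t) * real_of_int \<bar>k\<bar> powr (-2*t)"
    using a kp by (simp add: powr_divide powr_minus divide_simps)
  finally show ?thesis .
qed

lemma summ1:
  fixes a t :: real
  assumes a: "a > 0" and t: "2*t > 1"
  shows "(\<lambda>k::int. (1 + (of_int k)^2 / a^2) powr (-t)) summable_on UNIV"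
proof -
  let ?f = "\<lambda>k::int. (1 + (of_int k)^2 / a^2) powr (-t)"
  have "(\<lambda>k::int. real_of_int \<bar>k\<bar> powr (-(2*t)) * a powr (2*t)) summable_on UNIV"
    by (rule summable_on_cmult_left, rule int_powr_summable) (use t in simp)
  hence "(\<lambda>k::int. real_of_int \<bar>k\<bar> powr (-(2*t)) * a powr (2*t)) summable_on (UNIV - {0})"
    by (rule summable_on_subset) auto
  hence "?f summable_on (UNIV - {0})"
    by (rule summable_on_comparison_test) (use key_bound[OF a, of t] t in \<open>auto simp: mult.commute\<close>)
  hence "?f summable_on (insert 0 (UNIV - {0}))" by (subst summable_on_insert_iff)
  moreover have "insert (0::int) (UNIV - {0}) = UNIV" by auto
  ultimately show ?thesis by simp
qed

lemma summ2:
  fixes a t :: real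
  assumes a: "a > 0" and t: "2*t > 3"
  shows "(\<lambda>k::int. (of_int k)^2 * (1 + (of_int k)^2 / a^2) powr (-t)) summable_on UNIV"
proof -
  let ?f = "\<lambda>k::int. (of_int k)^2 * (1 + (of_int k)^2 / a^2) powr (-t)"
  have "(\<lambda>k::int. real_of_int \<bar>k\<bar> powr (-(2*t-2)) * a powr (2*t)) summable_on UNIV"
    by (rule summable_on_cmult_left, rule int_powr_summable) (use t in simp)
  hence "(\<lambda>k::int. real_of_int \<bar>k\<bar> powr (-(2*t-2)) * a powr (2*t)) summable_on (UNIV - {0})"
    by (rule summable_on_subset) auto
  moreover have "?f k \<le> real_of_int \<bar>k\<bar> powr (-(2*t-2)) * a powr (2*t)" if k: "k \<noteq> 0" for k
  proof -
    have kp: "real_of_int \<bar>k\<bar> > 0" using k by simp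
    have "?f k \<le> (of_int k)^2 * (a powr (2*t) * real_of_int \<bar>k\<bar> powr (-2*t))"
      by (rule mult_left_mono[OF key_bound[OF a _ k]]) (use t in auto)
    also have "\<dots> = real_of_int \<bar>k\<bar> powr 2 * (a powr (2*t) * real_of_int \<bar>k\<bar> powr (-2*t))"
      using kp by (simp add: powr_realpow')
    also have "\<dots> = real_of_int \<bar>k\<bar> powr (-(2*t-2)) * a powr (2*t)"
    proof -
      have "real_of_int \<bar>k\<bar> powr (2 + -2*t) = real_of_int \<bar>k\<bar> powr 2 * real_of_int \<bar>k\<bar> powr (-2*t)"
        by (rule powr_add)
      moreover have "2 + -2*t = -(2*t-2)" by simp
      ultimately show ?thesis by (simp only: mult_ac)
    qed
    finally show ?thesis .
  qed
  ultimately have "?f summable_on (UNIV - {0})"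
    by (rule summable_on_comparison_test) auto
  hence "?f summable_on (insert 0 (UNIV - {0}))" by (subst summable_on_insert_iff)
  moreover have "insert (0::int) (UNIV - {0}) = UNIV" by auto
  ultimately show ?thesis by simp
qed

lemma my_has_sum_diff:
  fixes f g :: "'a \<Rightarrow> real"
  assumes "(f has_sum x) A" "(g has_sum y) A"
  shows "((\<lambda>k. f k - g k) has_sum (x - y)) A"
proof -
  have "((\<lambda>k. - g k) has_sum (- y)) A" using assms(2) by (simp add: has_sum_uminus)
  from has_sum_add[OF assms(1) this] show ?thesis by simp
qed

lemma conc:
  fixes q x y :: real
  assumes q: "0 < q" "q < 1" and x: "x \<ge> 0" and y: "y > 0"
  shows "x powr q \<le> y powr q + q * y powr (q-1) * (x - y)"
proof -
  have yy: "y * y powr (q-1) = y powr q"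
    using y by (simp add: powr_mult_base)
  show ?thesis
  proof (cases "x = 0")
    case True
    have "0 \<le> (1-q) * y powr q" using q by simp
    also have "(1-q) * y powr q = y powr q + q * y powr (q-1) * (0 - y)"
      using yy by (simp add: algebra_simps)
    finally show ?thesis using True q by simp
  next
    case False
    hence xp: "x > 0" using x by simp
    have "x powr q * y powr (1-q) \<le> q*x + (1-q)*y"
      by (rule Youngs_inequality_0) (use q xp y in auto)
    hence "x powr q * y powr (1-q) * y powr (q-1) \<le> (q*x + (1-q)*y) * y powr (q-1)"
      by (rule mult_right_mono) simp
    moreover have "y powr (1-q) * y powr (q-1) = 1"
      using y by (simp add: powr_add[symmetric])
    ultimately have "x powr q \<le> (q*x + (1-q)*y) * y powr (q-1)"
      by (simp add: mult.assoc)
    also have "\<dots> = y powr q + q * y powr (q-1) * (x - y)"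
      using yy by (simp add: algebra_simps)
    finally show ?thesis .
  qed
qed

theorem theorem1:
  fixes q a :: real
  assumes "1/3 < q" and "q < 1" and "0 < a"
  shows "prob_dist_Z (pa q a)
    \<and> ((\<lambda>k. of_int k * pa q a k) has_sum 0) UNIV
    \<and> (\<exists>\<sigma>2. ((\<lambda>k. (of_int k)^2 * pa q a k) has_sum \<sigma>2) UNIV
         \<and> (\<forall>p. prob_dist_Z p
               \<and> ((\<lambda>k. of_int k * p k) has_sum 0) UNIV
               \<and> ((\<lambda>k. (of_int k)^2 * p k) has_sum \<sigma>2) UNIV
               \<longrightarrow> tsallis q p \<le> tsallis q (pa q a)))"
proof -
  note q1 = assms(1) and q2 = assms(2) and a = assms(3)
  define s where "s = 1 / (1 - q)"
  have e: "1 / (q - 1) = - s" unfolding s_def using q2 by (simp add: field_simps)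
  have s32: "2 * s > 3" unfolding s_def using q1 q2 by (simp add: field_simps)
  define u where "u k = 1 + (of_int k)^2 / a^2" for k :: int
  have upos: "u k \<ge> 1" for k unfolding u_def by simp
  define F where "F = fq q a"
  have gsum: "(\<lambda>k::int. u k powr (-s)) summable_on UNIV"
    using summ1[OF a, of s] s32 unfolding u_def by simp
  have F_eq: "F = (\<Sum>\<^sub>\<infinity>k. u k powr (-s))" unfolding F_def fq_def u_def e ..
  have gF: "((\<lambda>k. u k powr (-s)) has_sum F) UNIV" using gsum F_eq by (simp add: has_sum_iff)
  have Fpos: "F > 0"
  proof -
    have "((\<lambda>k. u k powr (-s)) has_sum (u 0 powr (-s) + infsum (\<lambda>k. u k powr (-s)) (UNIV - {0}))) (insert 0 (UNIV - {0}))"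
      by (rule has_sum_insert) (use summable_on_subset[OF gsum, of "UNIV - {0}"] in \<open>auto simp: has_sum_iff\<close>)
    moreover have "insert (0::int) (UNIV - {0}) = UNIV" by auto
    ultimately have "F = u 0 powr (-s) + infsum (\<lambda>k. u k powr (-s)) (UNIV - {0})"
      using gF has_sum_unique by metis
    moreover have "infsum (\<lambda>k. u k powr (-s)) (UNIV - {0}) \<ge> 0" by (rule infsum_nonneg) simp
    moreover have "u 0 = 1" unfolding u_def by simp
    ultimately show ?thesis by simp
  qed
  have pa_eq: "pa q a k = u k powr (-s) / F" for k unfolding pa_def F_def u_def e ..
  have pa_nonneg: "pa q a k \<ge> 0" for k using Fpos by (simp add: pa_eq)
  have pa_pos: "pa q a k > 0" for k using Fpos upos[of k] by (simp add: pa_eq)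
  have pa_sum: "(pa q a has_sum 1) UNIV"
  proof -
    have "((\<lambda>k. u k powr (-s) * (1/F)) has_sum (F * (1/F))) UNIV"
      by (rule has_sum_cmult_left[OF gF])
    thus ?thesis using Fpos by (simp add: pa_eq[abs_def])
  qed
  have prob: "prob_dist_Z (pa q a)" unfolding prob_dist_Z_def using pa_nonneg pa_sum by auto
  have k2sum: "(\<lambda>k::int. (of_int k)^2 * u k powr (-s)) summable_on UNIV"
    using summ2[OF a, of s] s32 unfolding u_def by simp
  define \<sigma>2 where "\<sigma>2 = infsum (\<lambda>k::int. (of_int k)^2 * u k powr (-s)) UNIV / F"
  have var: "((\<lambda>k. (of_int k)^2 * pa q a k) has_sum \<sigma>2) UNIV"
  proof -
    have "((\<lambda>k::int. (of_int k)^2 * u k powr (-s) * (1/F)) has_sum (infsum (\<lambda>k::int. (of_int k)^2 * u k powr (-s)) UNIV * (1/F))) UNIV"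
      by (rule has_sum_cmult_left) (use k2sum in \<open>simp add: has_sum_iff\<close>)
    thus ?thesis by (simp add: pa_eq \<sigma>2_def)
  qed
  have mean: "((\<lambda>k. of_int k * pa q a k) has_sum 0) UNIV"
  proof -
    let ?f = "\<lambda>k::int. of_int k * pa q a k"
    have "(\<lambda>k. norm (?f k)) summable_on UNIV"
    proof (rule summable_on_comparison_test)
      show "(\<lambda>k. (of_int k)^2 * pa q a k) summable_on UNIV" using var has_sum_imp_summable by blast
      fix k :: int
      have "\<bar>real_of_int k\<bar> \<le> (of_int k)^2"
      proof (cases "k = 0")
        case False
        hence "1 \<le> \<bar>real_of_int k\<bar>" by simp
        hence "\<bar>real_of_int k\<bar> * 1 \<le> \<bar>real_of_int k\<bar> * \<bar>real_of_int k\<bar>" by (intro mult_left_mono) auto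
        thus ?thesis by (simp add: power2_eq_square)
      qed simp
      thus "norm (?f k) \<le> (of_int k)^2 * pa q a k"
        using pa_nonneg[of k] by (simp add: abs_mult mult_right_mono)
      show "0 \<le> norm (?f k)" by simp
    qed
    hence sf: "?f summable_on UNIV" by (rule abs_summable_summable)
    then obtain S where S: "(?f has_sum S) UNIV" by (auto simp: summable_on_def)
    have "((\<lambda>k. ?f (- k)) has_sum S) UNIV"
      using S by (subst has_sum_reindex_bij_betw) (auto simp: bij_betw_def inj_on_def intro!: image_eqI[of _ uminus])
    moreover have "(\<lambda>k. ?f (- k)) = (\<lambda>k. - ?f k)" by (rule ext) (simp add: pa_def)
    ultimately have "((\<lambda>k. - ?f k) has_sum S) UNIV" by simp
    hence "(?f has_sum (-S)) UNIV" by (simp add: has_sum_uminus)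
    hence "S = - S" using S has_sum_unique by blast
    hence "S = 0" by simp
    thus ?thesis using S by simp
  qed
  define c where "c = F powr (1 - q)"
  have sq: "- (s*(q-1)) = 1" unfolding s_def using q2 by (simp add: field_simps)
  have pa_pow: "pa q a k powr (q - 1) = u k * c" for k
  proof -
    have "pa q a k powr (q - 1) = (u k powr (-s)) powr (q-1) / F powr (q - 1)"
      using Fpos upos[of k] by (simp add: pa_eq powr_divide)
    also have "\<dots> = u k / F powr (q - 1)"
      using upos[of k] by (simp only: powr_powr mult_minus_left sq powr_one_gt_zero_iff) simp
    also have "\<dots> = u k * c" unfolding c_def using Fpos
      by (simp add: powr_minus_divide[symmetric] divide_inverse powr_minus[symmetric])
    finally show ?thesis .
  qed
  have q0: "0 < q" using q1 by simp
  have pqsum: "(\<lambda>k. pa q a k powr q) summable_on UNIV"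
  proof -
    have "(\<lambda>k::int. (1 + (of_int k)^2 / a^2) powr (-(s*q)) * (1 / F powr q)) summable_on UNIV"
      by (rule summable_on_cmult_left, rule summ1[OF a]) (use q1 q2 in \<open>simp add: s_def field_simps\<close>)
    moreover have "(1 + (of_int k)^2 / a^2) powr (-(s*q)) * (1 / F powr q) = pa q a k powr q" for k
      using Fpos upos[of k] by (simp add: pa_eq powr_divide powr_powr u_def)
    ultimately show ?thesis by simp
  qed
  define P where "P = infsum (\<lambda>k. pa q a k powr q) UNIV"
  have PP: "((\<lambda>k. pa q a k powr q) has_sum P) UNIV" using pqsum P_def by (simp add: has_sum_iff)
  have lin: "((\<lambda>k. u k * r k) has_sum (1 + \<sigma>2 / a^2)) UNIV"
    if r1: "(r has_sum 1) UNIV" and r2: "((\<lambda>k. (of_int k)^2 * r k) has_sum \<sigma>2) UNIV" for r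
  proof -
    have "((\<lambda>k. r k + (1/a^2) * ((of_int k)^2 * r k)) has_sum (1 + (1/a^2) * \<sigma>2)) UNIV"
      by (intro has_sum_add r1 has_sum_cmult_right r2)
    thus ?thesis by (simp add: u_def algebra_simps)
  qed
  have maxi: "tsallis q p \<le> tsallis q (pa q a)"
    if hp: "prob_dist_Z p" and m2: "((\<lambda>k. (of_int k)^2 * p k) has_sum \<sigma>2) UNIV" for p
  proof -
    have p0: "p k \<ge> 0" for k using hp by (simp add: prob_dist_Z_def)
    have p1: "(p has_sum 1) UNIV" using hp by (simp add: prob_dist_Z_def)
    define G where "G k = pa q a k powr q + q * c * (u k * p k - u k * pa q a k)" for k
    have GP: "(G has_sum (P + q * c * ((1 + \<sigma>2 / a^2) - (1 + \<sigma>2 / a^2)))) UNIV"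
      unfolding G_def
      by (intro has_sum_add PP has_sum_cmult_right my_has_sum_diff lin p1 m2 pa_sum var)
    have le: "p k powr q \<le> G k" for k
      using conc[OF q0 q2 p0[of k] pa_pos[of k]] by (simp add: G_def pa_pow algebra_simps)
    have X: "(\<Sum>\<^sub>\<infinity>k. p k powr q) \<le> P"
    proof (cases "(\<lambda>k. p k powr q) summable_on UNIV")
      case True
      show ?thesis using has_sum_mono[OF True[unfolded summable_iff_has_sum_infsum] GP] le by simp
    next
      case False
      hence "(\<Sum>\<^sub>\<infinity>k. p k powr q) = 0" by (rule infsum_not_exists)
      moreover have "P \<ge> 0" unfolding P_def by (rule infsum_nonneg) simp
      ultimately show ?thesis by simp
    qed
    show ?thesis unfolding tsallis_def P_def[symmetric]
      using X q2 by (simp add: divide_right_mono_neg)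
  qed
  show ?thesis using prob mean var maxi by blast
qed

end
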